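(* Let $V$ be a finite nonempty set, $c\in\mathbb{R}^{P_V}$, $U\subseteq V$, and $\hat x$ a maximally specific partial function on $P_V$ with $\hat x^{-1}(1)\cap (U\times(V\setminus U))=\emptyset$. If $c_{ij}\le 0$ for all $ij\in (U\times(V\setminus U))\setminus\hat x^{-1}(0)$, then there is a maximizer $x^*$ of $\varphi_c$ over $X_V[\hat x]$ such that $x^*_{ij}=0$ for all $ij\in (U\times(V\setminus U))\setminus\hat x^{-1}(0)$.
   Context: $P_V=\{pq\in V^2\mid p\neq q\}$; $X_V$ is the set of $x\in\{0,1\}^{P_V}$ with $x_{pq}+x_{qr}-x_{pr}\le 1$ for all pairwise distinct $p,q,r\in V$; $\varphi_c(x)=\sum_{pq\in P_V}c_{pq}x_{pq}$. A partial function $\tilde x$ is a map from $\operatorname{dom}(\tilde x)\subseteq P_V$ to $\{0,1\}$, $\tilde x^{-1}(b)$ the pairs mapped to $b$, and $X_V[\tilde x]=\{x\in X_V\mid x_{pq}=\tilde x_{pq}\ \forall pq\in\operatorname{dom}(\tilde x)\}$. A pair $pq$ is decided if $x_{pq}=x'_{pq}$ for all $x,x'\in X_V[\tilde x]$; $\tilde x$ is maximally specific if $X_V[\tilde x]\ne\emptyset$ and the decided pairs are exactly $\operatorname{dom}(\tilde x)$. *)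

theory Defs
  imports Main "HOL.Real"
begin

definition PV :: "'a set \<Rightarrow> ('a \<times> 'a) set" where
  "PV V = {(p, q). p \<in> V \<and> q \<in> V \<and> p \<noteq> q}"

definition XV :: "'a set \<Rightarrow> (('a \<times> 'a) \<Rightarrow> nat) set" where
  "XV V = {x. (\<forall>pq \<in> PV V. x pq \<in> {0, 1}) \<and> (\<forall>pq. pq \<notin> PV V \<longrightarrow> x pq = 0) \<and>
     (\<forall>p \<in> V. \<forall>q \<in> V. \<forall>r \<in> V. p \<noteq> q \<and> q \<noteq> r \<and> p \<noteq> r \<longrightarrow>
        int (x (p, q)) + int (x (q, r)) - int (x (p, r)) \<le> 1)}"

definition phi :: "'a set \<Rightarrow> (('a \<times> 'a) \<Rightarrow> real) \<Rightarrow> (('a \<times> 'a) \<Rightarrow> nat) \<Rightarrow> real" where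
  "phi V c x = (\<Sum>pq \<in> PV V. c pq * real (x pq))"

definition partial_fn :: "'a set \<Rightarrow> (('a \<times> 'a) \<rightharpoonup> nat) \<Rightarrow> bool" where
  "partial_fn V xt \<longleftrightarrow> dom xt \<subseteq> PV V \<and> ran xt \<subseteq> {0, 1}"

definition preim :: "(('a \<times> 'a) \<rightharpoonup> nat) \<Rightarrow> nat \<Rightarrow> ('a \<times> 'a) set" where
  "preim xt b = {pq. xt pq = Some b}"

definition XV_restr :: "'a set \<Rightarrow> (('a \<times> 'a) \<rightharpoonup> nat) \<Rightarrow> (('a \<times> 'a) \<Rightarrow> nat) set" where
  "XV_restr V xt = {x \<in> XV V. \<forall>pq \<in> dom xt. xt pq = Some (x pq)}"

definition decided :: "'a set \<Rightarrow> (('a \<times> 'a) \<rightharpoonup> nat) \<Rightarrow> ('a \<times> 'a) \<Rightarrow> bool" where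
  "decided V xt pq \<longleftrightarrow> (\<forall>x \<in> XV_restr V xt. \<forall>x' \<in> XV_restr V xt. x pq = x' pq)"

definition maximally_specific :: "'a set \<Rightarrow> (('a \<times> 'a) \<rightharpoonup> nat) \<Rightarrow> bool" where
  "maximally_specific V xt \<longleftrightarrow> XV_restr V xt \<noteq> {} \<and>
     {pq \<in> PV V. decided V xt pq} = dom xt"

end

theory Submission
  imports Defs
begin

lemma finite_XV: assumes "finite V" shows "finite (XV V)"
proof -
  have fP: "finite (PV V)"
    by (rule finite_subset[of _ "V \<times> V"]) (use assms in \<open>auto simp: PV_def\<close>)
  have "XV V \<subseteq> {f. \<forall>x. (x \<in> PV V \<longrightarrow> f x \<in> {0,1}) \<and> (x \<notin> PV V \<longrightarrow> f x = 0)}"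
    by (auto simp: XV_def)
  moreover have "finite {f. \<forall>x. (x \<in> PV V \<longrightarrow> f x \<in> ({0,1}::nat set)) \<and> (x \<notin> PV V \<longrightarrow> f x = 0)}"
    by (rule finite_set_of_finite_funs) (use fP in auto)
  ultimately show ?thesis by (rule finite_subset)
qed

theorem corollary6p3:
  fixes V U :: "'a set" and c :: "('a \<times> 'a) \<Rightarrow> real" and xh :: "('a \<times> 'a) \<rightharpoonup> nat"
  assumes "finite V" and "V \<noteq> {}" and "U \<subseteq> V"
    and "partial_fn V xh" and "maximally_specific V xh"
    and "preim xh 1 \<inter> (U \<times> (V - U)) = {}"
    and "\<forall>ij \<in> (U \<times> (V - U)) - preim xh 0. c ij \<le> 0"
  shows "\<exists>xs \<in> XV_restr V xh. (\<forall>x \<in> XV_restr V xh. phi V c x \<le> phi V c xs) \<and>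
           (\<forall>ij \<in> (U \<times> (V - U)) - preim xh 0. xs ij = 0)"
proof -
  let ?S = "XV_restr V xh"
  have fS: "finite ?S" using finite_XV[OF assms(1)] by (auto simp: XV_restr_def)
  have neS: "?S \<noteq> {}" using assms(5) by (simp add: maximally_specific_def)
  define m where "m = Max (phi V c ` ?S)"
  have "m \<in> phi V c ` ?S" unfolding m_def using fS neS by simp
  then obtain x0 where x0: "x0 \<in> ?S" "phi V c x0 = m" by auto
  have x0max: "\<forall>x \<in> ?S. phi V c x \<le> phi V c x0" using x0 fS unfolding m_def by simp
  define x' where "x' = (\<lambda>pq. if pq \<in> U \<times> (V - U) then 0 else x0 pq)"
  have x0XV: "x0 \<in> XV V" and x0dom: "\<forall>pq \<in> dom xh. xh pq = Some (x0 pq)"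
    using x0(1) by (auto simp: XV_restr_def)
  have x'XV: "x' \<in> XV V"
  proof -
    have a: "\<forall>pq \<in> PV V. x0 pq \<in> {0, 1}" "\<forall>pq. pq \<notin> PV V \<longrightarrow> x0 pq = 0"
      and t: "\<And>p q r. p \<in> V \<Longrightarrow> q \<in> V \<Longrightarrow> r \<in> V \<Longrightarrow> p \<noteq> q \<Longrightarrow> q \<noteq> r \<Longrightarrow> p \<noteq> r \<Longrightarrow>
        int (x0 (p, q)) + int (x0 (q, r)) - int (x0 (p, r)) \<le> 1"
      using x0XV unfolding XV_def by blast+
    have "int (x' (p, q)) + int (x' (q, r)) - int (x' (p, r)) \<le> 1"
      if "p \<in> V" "q \<in> V" "r \<in> V" "p \<noteq> q" "q \<noteq> r" "p \<noteq> r" for p q r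
    proof -
      have b: "x0 (p,q) \<in> {0,1}" "x0 (q,r) \<in> {0,1}" "x0 (p,r) \<in> {0,1}"
        using a(1) that by (auto simp: PV_def)
      show ?thesis using t[OF that] b that unfolding x'_def by (auto split: if_splits)
    qed
    moreover have "\<forall>pq \<in> PV V. x' pq \<in> {0, 1}" "\<forall>pq. pq \<notin> PV V \<longrightarrow> x' pq = 0"
      using a by (auto simp: x'_def)
    ultimately show ?thesis unfolding XV_def by blast
  qed
  have x'dom: "\<forall>pq \<in> dom xh. xh pq = Some (x' pq)"
  proof
    fix pq assume pq: "pq \<in> dom xh"
    show "xh pq = Some (x' pq)"
    proof (cases "pq \<in> U \<times> (V - U)")
      case True
      have "xh pq = Some (x0 pq)" using x0dom pq by blast
      moreover have "x0 pq \<in> {0,1}" using assms(4) \<open>xh pq = Some (x0 pq)\<close>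
        unfolding partial_fn_def ran_def by blast
      moreover have "x0 pq \<noteq> 1" using assms(6) True \<open>xh pq = Some (x0 pq)\<close>
        unfolding preim_def by auto
      ultimately show ?thesis using True by (simp add: x'_def)
    qed (use x0dom pq in \<open>auto simp: x'_def\<close>)
  qed
  have x'S: "x' \<in> ?S" using x'XV x'dom by (simp add: XV_restr_def)
  have "phi V c x0 \<le> phi V c x'"
    unfolding phi_def
  proof (rule sum_mono)
    fix pq assume "pq \<in> PV V"
    show "c pq * real (x0 pq) \<le> c pq * real (x' pq)"
    proof (cases "pq \<in> U \<times> (V - U)")
      case True
      show ?thesis
      proof (cases "pq \<in> preim xh 0")
        case True
        then have "x0 pq = 0" using x0dom unfolding preim_def by force
        then show ?thesis by (simp add: x'_def)
      next
        case False
        then have "c pq \<le> 0" using assms(7) \<open>pq \<in> U \<times> (V - U)\<close> by blast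
        then show ?thesis using True by (simp add: x'_def mult_nonpos_nonneg)
      qed
    qed (simp add: x'_def)
  qed
  then have "\<forall>x \<in> ?S. phi V c x \<le> phi V c x'" using x0max by force
  moreover have "\<forall>ij \<in> (U \<times> (V - U)) - preim xh 0. x' ij = 0" by (simp add: x'_def)
  ultimately show ?thesis using x'S by blast
qed

end
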